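(* Let $P\in\mathbb{R}[x]$ have degree $n\ge 2$, and let $r_1,\dots,r_m\in\mathbb{C}$ be its distinct complex roots with multiplicities $\mu_1\ge\mu_2\ge\cdots\ge\mu_m\ge1$, so that $\operatorname{mult}(P)=\boldsymbol\mu=(\mu_1,\dots,\mu_m)$. Let $\bar{\boldsymbol\mu}=(\bar\mu_1,\dots,\bar\mu_n)$ be the conjugate of $\boldsymbol\mu$, i.e. $\bar\mu_i=\#\{j\in\{1,\dots,m\}:\mu_j\ge i\}$. For $1\le i\le n$ let $G_i=\gcd(P^{(0)},P^{(1)},\dots,P^{(i)})$, where $P^{(k)}$ denotes the $k$-th derivative of $P$ with respect to $x$. Then for every $1\le i\le n$, $$R_{(\bar\mu_1,\dots,\bar\mu_i)}\big(P^{(0)},P^{(1)},\dots,P^{(i)}\big)=c_i\prod_{k:\ \mu_k>i}(x-r_k)^{\mu_k-i}$$ for some nonzero constant $c_i$; in particular $R_{(\bar\mu_1,\dots,\bar\mu_i)}(P^{(0)},\dots,P^{(i)})$ equals $G_i$ up to a nonzero constant factor. (In other words, the incremental gcd $(G_1,\dots,G_n)$ of $(P^{(0)},\dots,P^{(n)})$ is, up to nonzero constant factors, $\big(R_{(\bar\mu_1)},R_{(\bar\mu_1,\bar\mu_2)},\dots,R_{(\bar\mu_1,\dots,\bar\mu_n)}\big)$.)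
   Context: Subresultants of several polynomials. Let $\boldsymbol F=(F_0,F_1,\dots,F_t)$ be polynomials in $x$ with $d_i=\deg F_i$ and $F_i=\sum_{j=0}^{d_i}a_{ij}x^j$, $a_{0d_0}\neq0$. For $\boldsymbol\delta=(\delta_1,\dots,\delta_t)\in\mathbb{Z}_{\ge0}^t$ with $|\boldsymbol\delta|:=\delta_1+\cdots+\delta_t\le d_0$, put $\delta_0=\max_{1\le i\le t,\ \delta_i\neq0}(d_i+\delta_i)-d_0$ if this maximum is $\ge d_0$, and $\delta_0=1$ otherwise. The generalized Sylvester matrix $\boldsymbol M_{\boldsymbol\delta}(\boldsymbol F)$ is the $(\delta_0+|\boldsymbol\delta|)\times(\delta_0+d_0)$ matrix whose rows are, in this order, the coefficient vectors of $x^{\delta_0-1}F_0,\dots,x^0F_0,\ x^{\delta_1-1}F_1,\dots,x^0F_1,\ \dots,\ x^{\delta_t-1}F_t,\dots,x^0F_t$ with respect to the monomials $x^{\delta_0+d_0-1},\dots,x,1$ (a polynomial $F_i$ with $\delta_i=0$ contributes no rows). For a $p\times q$ matrix $\boldsymbol M$ with $p\le q$ and columns $\boldsymbol M_1,\dots,\boldsymbol M_q$, its determinant polynomial is $\operatorname{dp}\boldsymbol M=\sum_{i=0}^{q-p}\det[\boldsymbol M_1,\dots,\boldsymbol M_{p-1},\boldsymbol M_{q-i}]\,x^i$. The $\boldsymbol\delta$-th subresultant is $R_{\boldsymbol\delta}(\boldsymbol F)=\operatorname{dp}\boldsymbol M_{\boldsymbol\delta}(\boldsymbol F)$. *)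

theory Defs
  imports "Jordan_Normal_Form.Determinant" "HOL-Computational_Algebra.Polynomial"
    "HOL-Computational_Algebra.Polynomial_Factorial" "HOL-Computational_Algebra.Field_as_Ring"
begin

text \<open>Polynomials F = [F_0, ..., F_t] are given as a list, and
  delta = [delta_1, ..., delta_t] as a list of length t.\<close>

definition sres_delta0 :: "'a::zero poly list \<Rightarrow> nat list \<Rightarrow> nat" where
  "sres_delta0 F \<delta> =
     (let d0 = degree (F ! 0);
          S = {degree (F ! i) + \<delta> ! (i - 1) | i. 1 \<le> i \<and> i < length F \<and> \<delta> ! (i - 1) \<noteq> 0}
      in if S \<noteq> {} \<and> Max S \<ge> d0 then Max S - d0 else 1)"

definition sres_row_polys :: "'a::comm_semiring_1 poly list \<Rightarrow> nat list \<Rightarrow> 'a poly list" where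
  "sres_row_polys F \<delta> =
     concat (map (\<lambda>(Fj, dj). map (\<lambda>k. monom 1 k * Fj) (rev [0..<dj]))
                 (zip F (sres_delta0 F \<delta> # \<delta>)))"

definition gen_sylvester_mat :: "'a::comm_semiring_1 poly list \<Rightarrow> nat list \<Rightarrow> 'a mat" where
  "gen_sylvester_mat F \<delta> =
     (let rows = sres_row_polys F \<delta>; q = sres_delta0 F \<delta> + degree (F ! 0)
      in mat (length rows) q (\<lambda>(r, c). coeff (rows ! r) (q - 1 - c)))"

definition det_poly :: "'a::comm_ring_1 mat \<Rightarrow> 'a poly" where
  "det_poly M =
     (let p = dim_row M; q = dim_col M
      in (\<Sum>i = 0..q - p. monom (det (mat p p (\<lambda>(r, c).
             if c < p - 1 then M $$ (r, c) else M $$ (r, q - 1 - i)))) i))"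

definition subresultant :: "'a::comm_ring_1 poly list \<Rightarrow> nat list \<Rightarrow> 'a poly" where
  "subresultant F \<delta> = det_poly (gen_sylvester_mat F \<delta>)"

definition mult_conj :: "real poly \<Rightarrow> nat \<Rightarrow> nat" where
  "mult_conj P j = card {r::complex. poly (map_poly complex_of_real P) r = 0
                                 \<and> order r (map_poly complex_of_real P) \<ge> j}"

end

theory Submission
  imports Defs "HOL-Computational_Algebra.Fundamental_Theorem_Algebra"
begin

lemma higher_pderiv_nonzero:
  fixes p :: "'a::{idom,semiring_char_0} poly"
  assumes "p \<noteq> 0" "j \<le> degree p"
  shows "(pderiv ^^ j) p \<noteq> 0"
proof
  assume h: "(pderiv ^^ j) p = 0"
  have "coeff ((pderiv ^^ j) p) (degree p - j) = pochhammer (of_nat (Suc (degree p - j))) j * coeff p (degree p - j + j)"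
    by (rule coeff_higher_pderiv)
  also have "degree p - j + j = degree p" using assms by simp
  finally have "pochhammer (of_nat (Suc (degree p - j))) j * lead_coeff p = (0::'a)" using h by simp
  moreover have "pochhammer (of_nat (Suc (degree p - j))) j \<noteq> (0::'a)"
  proof -
    have "pochhammer (of_nat (Suc (degree p - j))) j = (of_nat (pochhammer (Suc (degree p - j)) j) :: 'a)"
      by (simp only: pochhammer_of_nat)
    moreover have "pochhammer (Suc (degree p - j)) j > 0" by (rule pochhammer_pos) simp
    ultimately show ?thesis by (metis of_nat_eq_0_iff less_irrefl)
  qed
  ultimately show False using assms(1) by simp
qed

lemma order_higher_pderiv:
  fixes p :: "'a::field_char_0 poly"
  assumes "p \<noteq> 0" "j \<le> order r p"
  shows "order r ((pderiv ^^ j) p) = order r p - j"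
  using assms(2)
proof (induction j)
  case 0 then show ?case by simp
next
  case (Suc j)
  have ordle: "order r p \<le> degree p" using assms(1) by (rule order_degree)
  have nz: "(pderiv ^^ j) p \<noteq> 0" using higher_pderiv_nonzero[OF assms(1)] Suc.prems ordle by simp
  have nz2: "pderiv ((pderiv ^^ j) p) \<noteq> 0" using higher_pderiv_nonzero[OF assms(1), of "Suc j"] Suc.prems ordle by simp
  have o: "order r ((pderiv ^^ j) p) = order r p - j" using Suc by simp
  have "poly ((pderiv ^^ j) p) r = 0" using o Suc.prems order_root by fastforce
  from order_pderiv[OF nz this] o show ?case by simp
qed

lemma inj_step:
  fixes Pc :: "'a::field_char_0 poly" and A :: "nat \<Rightarrow> 'a poly"
  assumes Pc: "Pc \<noteq> 0" and s: "1 \<le> s" "s \<le> i"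
    and deg: "\<forall>k \<ge> card {r. poly Pc r = 0 \<and> order r Pc \<ge> s}. coeff (A s) k = 0"
    and sum: "(\<Sum>j\<le>i. A j * (pderiv ^^ j) Pc) = 0"
    and zero: "\<forall>j. s < j \<and> j \<le> i \<longrightarrow> A j = 0"
  shows "A s = 0"
proof -
  have sum2: "(\<Sum>j\<le>s. A j * (pderiv ^^ j) Pc) = 0"
  proof -
    have "(\<Sum>j\<le>i. A j * (pderiv ^^ j) Pc) = (\<Sum>j\<le>s. A j * (pderiv ^^ j) Pc)"
      by (rule sum.mono_neutral_right) (use s zero in auto)
    then show ?thesis using sum by simp
  qed
  have sum3: "A s * (pderiv ^^ s) Pc = - (\<Sum>j<s. A j * (pderiv ^^ j) Pc)"
    using sum2 by (simp add: lessThan_Suc_atMost[symmetric] eq_neg_iff_add_eq_0 add.commute)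
  have roots: "poly (A s) r = 0" if r: "poly Pc r = 0" "order r Pc \<ge> s" for r
  proof (rule ccontr)
    assume nr: "poly (A s) r \<noteq> 0"
    define mu where "mu = order r Pc"
    define W where "W = [:-r, 1:] ^ (mu - s + 1)"
    have "W dvd (\<Sum>j<s. A j * (pderiv ^^ j) Pc)"
    proof (rule dvd_sum)
      fix j assume j: "j \<in> {..<s}"
      have "order r ((pderiv ^^ j) Pc) = mu - j"
        using order_higher_pderiv[OF Pc, of j r] j r unfolding mu_def by simp
      moreover have "mu - s + 1 \<le> mu - j" using j r unfolding mu_def by auto
      ultimately have "W dvd (pderiv ^^ j) Pc" unfolding W_def order_divides by simp
      then show "W dvd A j * (pderiv ^^ j) Pc" by simp
    qed
    then have "W dvd A s * (pderiv ^^ s) Pc" unfolding sum3 by simp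
    moreover have "A s \<noteq> 0" using nr by auto
    moreover have "(pderiv ^^ s) Pc \<noteq> 0"
      using higher_pderiv_nonzero[OF Pc, of s] order_degree[OF Pc, of r] r by simp
    moreover have "order r (A s) = 0" using nr by (rule order_0I)
    moreover have "order r ((pderiv ^^ s) Pc) = mu - s"
      using order_higher_pderiv[OF Pc, of s r] r unfolding mu_def by simp
    ultimately show False unfolding W_def order_divides
      by (simp add: order_mult)
  qed
  show ?thesis
  proof (rule ccontr)
    assume nz: "A s \<noteq> 0"
    define c where "c = card {r. poly Pc r = 0 \<and> order r Pc \<ge> s}"
    have "degree (A s) < c"
    proof (rule ccontr)
      assume "\<not> degree (A s) < c"
      then have "coeff (A s) (degree (A s)) = 0" using deg unfolding c_def by simp
      then show False using nz by simp
    qed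
    moreover have "c \<le> card {r. poly (A s) r = 0}"
      unfolding c_def
      by (rule card_mono) (use poly_roots_finite[OF nz] roots in auto)
    moreover have "card {r. poly (A s) r = 0} \<le> degree (A s)" by (rule card_poly_roots_bound[OF nz])
    ultimately show False by simp
  qed
qed

lemma inj_lemma:
  fixes Pc :: "'a::field_char_0 poly" and A :: "nat \<Rightarrow> 'a poly"
  assumes Pc: "Pc \<noteq> 0"
    and deg: "\<forall>j. 1 \<le> j \<and> j \<le> i \<longrightarrow> (\<forall>k \<ge> card {r. poly Pc r = 0 \<and> order r Pc \<ge> j}. coeff (A j) k = 0)"
    and sum: "(\<Sum>j\<le>i. A j * (pderiv ^^ j) Pc) = 0"
  shows "\<forall>j\<le>i. A j = 0"
proof -
  have main: "\<forall>j. n \<le> j \<and> j \<le> i \<longrightarrow> A j = 0" if "1 \<le> n" for n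
  proof (cases "n \<le> Suc i")
    case True
    show ?thesis using True
    proof (induction n rule: inc_induct)
      case base then show ?case by auto
    next
      case (step m)
      have "A m = 0"
        using inj_step[OF Pc, of m i A] step deg sum that
        by (simp add: less_Suc_eq_le)
      then show ?case using step by (metis le_antisym not_less_eq_eq)
    qed
  next
    case False then show ?thesis by auto
  qed
  then have "\<forall>j. 1 \<le> j \<and> j \<le> i \<longrightarrow> A j = 0" by blast
  then have "(\<Sum>j\<le>i. A j * (pderiv ^^ j) Pc) = A 0 * Pc"
    by (subst sum.mono_neutral_right[of "{..i}" "{0}"]) auto
  then have "A 0 = 0" using sum Pc by simp
  with \<open>\<forall>j. 1 \<le> j \<and> j \<le> i \<longrightarrow> A j = 0\<close> show ?thesis by (metis less_one not_less)
qed

lemma sum_lessThan_add: "(\<Sum>i<m+(n::nat). g i) = (\<Sum>i<m. g i) + (\<Sum>i<n. g (i + m))"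
  by (induction n) (simp_all add: add_ac)

definition blk :: "'a::comm_semiring_1 poly \<Rightarrow> nat \<Rightarrow> 'a poly list" where
  "blk f d = map (\<lambda>k. monom 1 k * f) (rev [0..<d])"

definition rows_of :: "('a::comm_semiring_1 poly \<times> nat) list \<Rightarrow> 'a poly list" where
  "rows_of ps = concat (map (\<lambda>(f, d). blk f d) ps)"

lemma blk_nth: "r < d \<Longrightarrow> blk f d ! r = monom 1 (d - 1 - r) * f"
  unfolding blk_def by (simp add: rev_nth)

lemma length_blk[simp]: "length (blk f d) = d" unfolding blk_def by simp

lemma coeff_blkA: "coeff (\<Sum>r<d. monom (v r) (d - 1 - r)) k = (if k < d then v (d - 1 - k) else (0::'a::comm_ring_1))"
proof -
  have e: "coeff (\<Sum>r<d. monom (v r) (d - 1 - r)) k = (\<Sum>r<d. if d - 1 - r = k then v r else 0)"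
    by (simp add: coeff_sum)
  show ?thesis
  proof (cases "k < d")
    case True
    have "(\<Sum>r<d. if d - 1 - r = k then v r else 0) = (\<Sum>r<d. if r = d - 1 - k then v r else 0)"
      by (rule sum.cong) (use True in auto)
    also have "\<dots> = v (d - 1 - k)" using True by (simp add: sum.delta)
    finally show ?thesis using e True by simp
  next
    case False
    have "(\<Sum>r<d. if d - 1 - r = k then v r else 0) = 0"
      by (rule sum.neutral) (use False in auto)
    then show ?thesis using e False by simp
  qed
qed

lemma rows_rep:
  fixes ps :: "('a::comm_ring_1 poly \<times> nat) list"
  shows "\<forall>v. \<exists>A. (\<Sum>r<length (rows_of ps). smult (v r) (rows_of ps ! r)) = (\<Sum>j<length ps. A j * fst (ps ! j))
     \<and> (\<forall>j<length ps. \<forall>k\<ge>snd (ps ! j). coeff (A j) k = 0)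
     \<and> ((\<forall>j<length ps. A j = 0) \<longrightarrow> (\<forall>r<length (rows_of ps). v r = 0))"
proof (induction ps)
  case Nil then show ?case by (simp add: rows_of_def)
next
  case (Cons p ps)
  obtain f d where p: "p = (f, d)" by (cases p)
  have ro: "rows_of (p # ps) = blk f d @ rows_of ps" by (simp add: rows_of_def p)
  show ?case
  proof
    fix v :: "nat \<Rightarrow> 'a"
    obtain A' where A': "(\<Sum>r<length (rows_of ps). smult (v (r + d)) (rows_of ps ! r)) = (\<Sum>j<length ps. A' j * fst (ps ! j))"
      "\<forall>j<length ps. \<forall>k\<ge>snd (ps ! j). coeff (A' j) k = 0"
      "(\<forall>j<length ps. A' j = 0) \<longrightarrow> (\<forall>r<length (rows_of ps). v (r + d) = 0)"
      using Cons.IH[THEN spec, of "\<lambda>r. v (r + d)"] by blast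
    define A0 where "A0 = (\<Sum>r<d. monom (v r) (d - 1 - r))"
    define A where "A = (\<lambda>j. case j of 0 \<Rightarrow> A0 | Suc j' \<Rightarrow> A' j')"
    have "(\<Sum>r<length (rows_of (p # ps)). smult (v r) (rows_of (p # ps) ! r))
        = (\<Sum>r<d. smult (v r) (blk f d ! r)) + (\<Sum>r<length (rows_of ps). smult (v (r + d)) (rows_of ps ! r))"
    proof -
      have l: "length (rows_of (p # ps)) = d + length (rows_of ps)" using ro by simp
      have s1: "(\<Sum>r<d. smult (v r) (rows_of (p # ps) ! r)) = (\<Sum>r<d. smult (v r) (blk f d ! r))"
        by (rule sum.cong) (simp_all add: ro nth_append)
      have s2: "(\<Sum>r<length (rows_of ps). smult (v (r + d)) (rows_of (p # ps) ! (r + d))) = (\<Sum>r<length (rows_of ps). smult (v (r + d)) (rows_of ps ! r))"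
        by (rule sum.cong) (simp_all add: ro nth_append)
      show ?thesis unfolding l sum_lessThan_add s1 s2 ..
    qed
    also have "(\<Sum>r<d. smult (v r) (blk f d ! r)) = A0 * f"
      unfolding A0_def sum_distrib_right
      by (rule sum.cong) (simp_all add: blk_nth, metis mult.right_neutral mult_smult_left smult_monom)
    finally have e: "(\<Sum>r<length (rows_of (p # ps)). smult (v r) (rows_of (p # ps) ! r))
        = (\<Sum>j<length (p # ps). A j * fst ((p # ps) ! j))"
      using A'(1) unfolding length_Cons sum.lessThan_Suc_shift by (simp add: A_def p)
    have c: "\<forall>j<length (p # ps). \<forall>k\<ge>snd ((p # ps) ! j). coeff (A j) k = 0"
    proof (intro allI impI)
      fix j k assume j: "j < length (p # ps)" and k: "snd ((p # ps) ! j) \<le> k"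
      show "coeff (A j) k = 0"
      proof (cases j)
        case 0 then show ?thesis using k coeff_blkA[where d=d and v=v and k=k] by (simp add: A_def A0_def p)
      next
        case (Suc j') then show ?thesis using k j A'(2) by (simp add: A_def)
      qed
    qed
    have z: "(\<forall>j<length (p # ps). A j = 0) \<longrightarrow> (\<forall>r<length (rows_of (p # ps)). v r = 0)"
    proof (intro impI allI)
      fix r assume all: "\<forall>j<length (p # ps). A j = 0" and r: "r < length (rows_of (p # ps))"
      have "A0 = 0" using all[rule_format, of 0] by (simp add: A_def)
      have "\<forall>j<length ps. A' j = 0" using all by (auto simp: A_def)
      then have rest: "\<forall>r<length (rows_of ps). v (r + d) = 0" using A'(3) by blast
      show "v r = 0"
      proof (cases "r < d")
        case True
        have "coeff A0 (d - 1 - r) = v r" using True unfolding A0_def coeff_blkA by simp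
        then show ?thesis using \<open>A0 = 0\<close> by simp
      next
        case False
        then show ?thesis using rest[rule_format, of "r - d"] r ro by simp
      qed
    qed
    show "\<exists>A. (\<Sum>r<length (rows_of (p # ps)). smult (v r) (rows_of (p # ps) ! r)) = (\<Sum>j<length (p # ps). A j * fst ((p # ps) ! j))
     \<and> (\<forall>j<length (p # ps). \<forall>k\<ge>snd ((p # ps) ! j). coeff (A j) k = 0)
     \<and> ((\<forall>j<length (p # ps). A j = 0) \<longrightarrow> (\<forall>r<length (rows_of (p # ps)). v r = 0))"
      using e c z by blast
  qed
qed

definition SM :: "'a::comm_ring_1 poly list \<Rightarrow> nat \<Rightarrow> 'a mat" where
  "SM rs q = mat (length rs) q (\<lambda>(r, c). coeff (rs ! r) (q - 1 - c))"

definition Mi :: "'a::comm_ring_1 poly list \<Rightarrow> nat \<Rightarrow> nat \<Rightarrow> 'a mat" where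
  "Mi rs q i = (let M = SM rs q; p = length rs in mat p p (\<lambda>(r, c).
             if c < p - 1 then M $$ (r, c) else M $$ (r, q - 1 - i)))"

lemma SM_dims[simp]: "dim_row (SM rs q) = length rs" "dim_col (SM rs q) = q"
  by (simp_all add: SM_def)

lemma Mi_dims[simp]: "dim_row (Mi rs q i) = length rs" "dim_col (Mi rs q i) = length rs"
  by (simp_all add: Mi_def Let_def)

lemma det_poly_SM: "det_poly (SM rs q) = (\<Sum>i = 0..q - length rs. monom (det (Mi rs q i)) i)"
  unfolding det_poly_def Mi_def Let_def SM_dims by simp

lemma Mi_carrier: "Mi rs q i \<in> carrier_mat (length rs) (length rs)"
  unfolding Mi_def Let_def by simp

lemma Mi_index: "r < length rs \<Longrightarrow> c < length rs \<Longrightarrow> length rs \<le> q \<Longrightarrow> i < q \<Longrightarrow>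
  Mi rs q i $$ (r, c) = (if c < length rs - 1 then coeff (rs ! r) (q - 1 - c) else coeff (rs ! r) i)"
  unfolding Mi_def Let_def SM_def by auto

lemma Mi_laplace:
  assumes p: "1 \<le> length rs" "length rs \<le> q" and i: "i < q"
  shows "det (Mi rs q i) = (\<Sum>r<length rs. coeff (rs ! r) i * cofactor (Mi rs q 0) r (length rs - 1))"
proof -
  let ?p = "length rs"
  have "det (Mi rs q i) = (\<Sum>r<?p. Mi rs q i $$ (r, ?p - 1) * cofactor (Mi rs q i) r (?p - 1))"
    by (rule laplace_expansion_column[OF Mi_carrier]) (use p in auto)
  also have "\<dots> = (\<Sum>r<?p. coeff (rs ! r) i * cofactor (Mi rs q 0) r (?p - 1))"
  proof (rule sum.cong)
    fix r assume r: "r \<in> {..<?p}"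
    have "mat_delete (Mi rs q i) r (?p - 1) = mat_delete (Mi rs q 0) r (?p - 1)"
      by (rule eq_matI) (use p i r in \<open>auto simp: mat_delete_def Mi_index\<close>)
    then show "Mi rs q i $$ (r, ?p - 1) * cofactor (Mi rs q i) r (?p - 1) = coeff (rs ! r) i * cofactor (Mi rs q 0) r (?p - 1)"
      using p i r by (simp add: Mi_index cofactor_def)
  qed simp
  finally show ?thesis .
qed

lemma Mi_zero:
  assumes p: "1 \<le> length rs" "length rs \<le> q" and i: "q - length rs < i" "i < q"
  shows "det (Mi rs q i) = 0"
proof (rule det_identical_columns[OF Mi_carrier])
  let ?p = "length rs"
  show "q - 1 - i \<noteq> ?p - 1" "q - 1 - i < ?p" "?p - 1 < ?p" using p i by auto
  show "col (Mi rs q i) (q - 1 - i) = col (Mi rs q i) (?p - 1)"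
    by (rule eq_vecI) (use p i in \<open>auto simp: Mi_index\<close>)
qed

lemma det_poly_rep:
  assumes p: "1 \<le> length rs" "length rs \<le> q"
    and deg: "\<forall>r<length rs. \<forall>k\<ge>q. coeff (rs ! r) k = 0"
  shows "det_poly (SM rs q) = (\<Sum>r<length rs. smult (cofactor (Mi rs q 0) r (length rs - 1)) (rs ! r))"
proof (rule poly_eqI)
  fix k
  let ?p = "length rs"
  let ?cof = "\<lambda>r. cofactor (Mi rs q 0) r (length rs - 1)"
  have L: "coeff (det_poly (SM rs q)) k = (if k \<le> q - ?p then det (Mi rs q k) else 0)"
  proof -
    have "coeff (det_poly (SM rs q)) k = (\<Sum>i = 0..q - ?p. if i = k then det (Mi rs q i) else 0)"
      unfolding det_poly_SM by (simp add: coeff_sum coeff_monom)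
    also have "\<dots> = (if k \<le> q - ?p then det (Mi rs q k) else 0)"
      by (simp add: sum.delta')
    finally show ?thesis .
  qed
  have R: "coeff (\<Sum>r<?p. smult (?cof r) (rs ! r)) k = (\<Sum>r<?p. coeff (rs ! r) k * ?cof r)"
    by (simp add: coeff_sum mult.commute)
  show "coeff (det_poly (SM rs q)) k = coeff (\<Sum>r<?p. smult (?cof r) (rs ! r)) k"
    unfolding L R
  proof (cases "k < q")
    case True
    then show "(if k \<le> q - ?p then det (Mi rs q k) else 0) = (\<Sum>r<?p. coeff (rs ! r) k * ?cof r)"
      using Mi_laplace[OF p True] Mi_zero[OF p _ True] by auto
  next
    case False
    then show "(if k \<le> q - ?p then det (Mi rs q k) else 0) = (\<Sum>r<?p. coeff (rs ! r) k * ?cof r)"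
      using deg p by auto
  qed
qed

lemma det_poly_top:
  assumes p: "1 \<le> length rs" "length rs \<le> q"
  shows "coeff (det_poly (SM rs q)) (q - length rs) = det (Mi rs q (q - length rs))"
    and "degree (det_poly (SM rs q)) \<le> q - length rs"
proof -
  show "coeff (det_poly (SM rs q)) (q - length rs) = det (Mi rs q (q - length rs))"
    unfolding det_poly_SM by (simp add: coeff_sum coeff_monom sum.delta')
  show "degree (det_poly (SM rs q)) \<le> q - length rs"
    unfolding det_poly_SM
    by (rule degree_le) (simp add: coeff_sum coeff_monom sum.delta')
qed

lemma det_top_nonzero:
  fixes rs :: "'a::field poly list"
  assumes p: "1 \<le> length rs" "length rs \<le> q"
    and deg: "\<forall>r<length rs. \<forall>k\<ge>q. coeff (rs ! r) k = 0"
    and indep: "\<And>v. (\<forall>k\<ge>q - length rs. coeff (\<Sum>r<length rs. smult (v r) (rs ! r)) k = 0) \<Longrightarrow> \<forall>r<length rs. v r = 0"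
  shows "det (Mi rs q (q - length rs)) \<noteq> 0"
proof
  let ?p = "length rs"
  let ?A = "Mi rs q (q - ?p)"
  assume "det ?A = 0"
  moreover have "det (transpose_mat ?A) = det ?A" using det_transpose[OF Mi_carrier[of rs q "q - ?p"]] .
  ultimately have "det (transpose_mat ?A) = 0" by simp
  then obtain w where w: "w \<in> carrier_vec ?p" "w \<noteq> 0\<^sub>v ?p" "transpose_mat ?A *\<^sub>v w = 0\<^sub>v ?p"
    using det_0_iff_vec_prod_zero[of "transpose_mat ?A" ?p] Mi_carrier by auto
  define v where "v = (\<lambda>r. w $ r)"
  have col0: "(\<Sum>r<?p. v r * coeff (rs ! r) (q - 1 - c)) = 0" if c: "c < ?p" for c
  proof -
    have "(transpose_mat ?A *\<^sub>v w) $ c = 0" using w(3) c by simp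
    moreover have "(transpose_mat ?A *\<^sub>v w) $ c = (\<Sum>r<?p. ?A $$ (r, c) * w $ r)"
      using c w(1) Mi_carrier[of rs q "q - ?p"]
      by (auto simp: scalar_prod_def col_def lessThan_atLeast0 intro!: sum.cong)
    moreover have "?A $$ (r, c) = coeff (rs ! r) (q - 1 - c)" if r: "r < ?p" for r
    proof (cases "c < ?p - 1")
      case True then show ?thesis using Mi_index[of r rs c q "q - ?p"] r c p by simp
    next
      case False
      then have "q - 1 - c = q - ?p" using c p by simp
      then show ?thesis using Mi_index[of r rs c q "q - ?p"] r c p False by simp
    qed
    ultimately show ?thesis unfolding v_def by (simp add: mult.commute)
  qed
  have "\<forall>k\<ge>q - ?p. coeff (\<Sum>r<?p. smult (v r) (rs ! r)) k = 0"
  proof (intro allI impI)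
    fix k assume k: "q - ?p \<le> k"
    show "coeff (\<Sum>r<?p. smult (v r) (rs ! r)) k = 0"
    proof (cases "k < q")
      case True
      have "q - 1 - (q - 1 - k) = k" using True by simp
      then show ?thesis using col0[of "q - 1 - k"] True k p by (simp add: coeff_sum)
    next
      case False then show ?thesis using deg by (simp add: coeff_sum)
    qed
  qed
  then have "\<forall>r<?p. v r = 0" by (rule indep)
  then have "w = 0\<^sub>v ?p" using w(1) unfolding v_def by (intro eq_vecI) auto
  then show False using w(2) by simp
qed

abbreviation mpc :: "real poly \<Rightarrow> complex poly" where "mpc \<equiv> map_poly complex_of_real"

lemma mpc_mult: "mpc (p * q) = mpc p * mpc q"
  by (rule poly_eqI) (simp add: coeff_map_poly coeff_mult of_real_sum)

lemma mpc_add: "mpc (p + q) = mpc p + mpc q"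
  by (rule poly_eqI) (simp add: coeff_map_poly)

lemma mpc_sum: "mpc (\<Sum>j\<in>A. f j) = (\<Sum>j\<in>A. mpc (f j))"
  by (rule poly_eqI) (simp add: coeff_map_poly coeff_sum of_real_sum)

lemma mpc_smult: "mpc (smult c p) = smult (complex_of_real c) (mpc p)"
  by (rule poly_eqI) (simp add: coeff_map_poly)

lemma mpc_pderiv: "mpc (pderiv p) = pderiv (mpc p)"
  by (rule poly_eqI) (simp add: coeff_map_poly coeff_pderiv)

lemma mpc_higher_pderiv: "mpc ((pderiv ^^ j) p) = (pderiv ^^ j) (mpc p)"
  by (induction j) (simp_all add: mpc_pderiv)

lemma mpc_eq_0_iff: "mpc p = 0 \<longleftrightarrow> p = 0"
  by (simp add: map_poly_eq_0_iff)

lemma mpc_degree: "degree (mpc p) = degree p"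
  by (rule degree_map_poly) simp

lemma mpc_dvd: assumes "mpc a dvd mpc b" shows "a dvd b"
proof (cases "a = 0")
  case True
  then show ?thesis using assms by (simp add: mpc_eq_0_iff)
next
  case False
  have "b = a * (b div a) + b mod a" by simp
  then have "mpc b = mpc a * mpc (b div a) + mpc (b mod a)" by (metis mpc_add mpc_mult)
  moreover have "mpc a dvd mpc a * mpc (b div a)" by simp
  ultimately have d: "mpc a dvd mpc (b mod a)" using assms by (metis dvd_add_right_iff)
  show ?thesis
  proof (rule ccontr)
    assume "\<not> a dvd b"
    then have nz: "b mod a \<noteq> 0" by (simp add: mod_eq_0_iff_dvd)
    have "degree (b mod a) < degree a" using degree_mod_less'[OF False nz] .
    moreover have "degree (mpc a) \<le> degree (mpc (b mod a))"
      using dvd_imp_degree_le[OF d] nz by (simp add: mpc_eq_0_iff)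
    ultimately show False by (simp add: mpc_degree)
  qed
qed

lemma coprime_linear:
  fixes a b :: complex
  assumes "a \<noteq> b" shows "coprime [:-a, 1:] [:-b, 1:]"
proof (rule coprimeI)
  fix c assume "c dvd [:-a, 1:]" "c dvd [:-b, 1:]"
  then have "c dvd [:-a, 1:] - [:-b, 1:]" by (rule dvd_diff)
  moreover have "[:-a, 1:] - [:-b, 1:] = [:b - a:]" by simp
  moreover have "is_unit [:b - a:]" using assms by (intro is_unit_triv) simp
  ultimately show "is_unit c" using dvd_unit_imp_unit by metis
qed

lemma prod_lin_dvd:
  fixes p :: "complex poly"
  assumes "finite S" "\<forall>r\<in>S. [:-r, 1:] ^ (e r) dvd p"
  shows "(\<Prod>r\<in>S. [:-r, 1:] ^ (e r)) dvd p"
  using assms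
proof (induction S rule: finite_induct)
  case empty then show ?case by simp
next
  case (insert a S)
  have cop: "coprime ([:-a, 1:] ^ (e a)) (\<Prod>r\<in>S. [:-r, 1:] ^ (e r))"
  proof (rule prod_coprime_right)
    fix r assume "r \<in> S"
    then have "a \<noteq> r" using insert by auto
    then show "coprime ([:-a, 1:] ^ (e a)) ([:-r, 1:] ^ (e r))"
      using coprime_linear by (simp add: coprime_power_left_iff coprime_power_right_iff)
  qed
  show ?case using insert cop by (simp add: divides_mult)
qed

lemma const_of_degree0: "degree (K :: 'a::zero poly) = 0 \<Longrightarrow> K = [:coeff K 0:]"
  by (rule poly_eqI) (auto simp: coeff_eq_0 coeff_pCons split: nat.split)

lemma row_polys_eq: "sres_row_polys F \<delta> = rows_of (zip F (sres_delta0 F \<delta> # \<delta>))"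
  unfolding sres_row_polys_def rows_of_def blk_def by simp

lemma length_rows_of: "length (rows_of ps) = sum_list (map snd ps)"
  unfolding rows_of_def by (induction ps) auto

lemma gen_syl_eq: "gen_sylvester_mat F \<delta> = SM (sres_row_polys F \<delta>) (sres_delta0 F \<delta> + degree (F ! 0))"
  unfolding gen_sylvester_mat_def SM_def Let_def by simp

lemma rows_deg:
  fixes F :: "'a::comm_ring_1 poly list"
  assumes len: "length F = Suc (length \<delta>)"
  shows "\<forall>r<length (sres_row_polys F \<delta>). \<forall>k\<ge>sres_delta0 F \<delta> + degree (F ! 0). coeff (sres_row_polys F \<delta> ! r) k = 0"
proof (intro allI impI)
  fix r k
  let ?d0 = "degree (F ! 0)"
  let ?D = "sres_delta0 F \<delta>"
  let ?q = "?D + ?d0"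
  assume r: "r < length (sres_row_polys F \<delta>)" and k: "?q \<le> k"
  let ?x = "sres_row_polys F \<delta> ! r"
  have "?x \<in> set (rows_of (zip F (?D # \<delta>)))" using r unfolding row_polys_eq by simp
  then obtain f d where fd: "(f, d) \<in> set (zip F (?D # \<delta>))" "?x \<in> set (blk f d)"
    unfolding rows_of_def by auto
  then obtain m where m: "m < d" "?x = monom 1 m * f" unfolding blk_def by auto
  from fd(1) obtain j where j: "j < length F" "f = F ! j" "d = (?D # \<delta>) ! j"
    using len by (auto simp: in_set_zip)
  have degx: "degree ?x \<le> m + degree f"
    unfolding m(2) by (meson add_right_mono degree_monom_le degree_mult_le order_trans)
  have "m + degree f < ?q"
  proof (cases j)
    case 0 then show ?thesis using j m by simp
  next
    case (Suc j')
    define S where "S = {degree (F ! i) + \<delta> ! (i - 1) | i. 1 \<le> i \<and> i < length F \<and> \<delta> ! (i - 1) \<noteq> 0}"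
    have D: "?D = (if S \<noteq> {} \<and> Max S \<ge> ?d0 then Max S - ?d0 else 1)"
      unfolding sres_delta0_def S_def Let_def by simp
    have dj: "d = \<delta> ! (j - 1)" using j Suc by simp
    have inS: "degree f + d \<in> S" unfolding S_def using j Suc m dj
      by (intro CollectI exI[of _ j]) auto
    have finS: "finite S"
    proof -
      have "S \<subseteq> (\<lambda>i. degree (F ! i) + \<delta> ! (i - 1)) ` {..<length F}" unfolding S_def by auto
      then show ?thesis by (rule finite_subset) simp
    qed
    have le: "degree f + d \<le> Max S" using Max_ge[OF finS inS] .
    show ?thesis
    proof (cases "S \<noteq> {} \<and> Max S \<ge> ?d0")
      case True then show ?thesis using D le m by simp
    next
      case False
      then have "Max S < ?d0" using inS by auto
      then show ?thesis using D le m False by simp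
    qed
  qed
  then show "coeff ?x k = 0" using degx k by (intro coeff_eq_0) simp
qed

lemma degree_eq_sum_order:
  fixes Pc :: "complex poly"
  assumes "Pc \<noteq> 0"
  shows "finite {r. poly Pc r = 0}" "degree Pc = (\<Sum>r\<in>{r. poly Pc r = 0}. order r Pc)"
proof -
  show fin: "finite {r. poly Pc r = 0}" using poly_roots_finite[OF assms] .
  have "degree Pc = degree (smult (lead_coeff Pc) (\<Prod>z|poly Pc z = 0. [:-z, 1:] ^ order z Pc))"
    using complex_poly_decompose[of Pc] by simp
  also have "\<dots> = degree (\<Prod>z|poly Pc z = 0. [:-z, 1:] ^ order z Pc)"
    using assms by simp
  also have "\<dots> = (\<Sum>z|poly Pc z = 0. degree ([:-z, 1:] ^ order z Pc))"
    by (rule degree_prod_sum_eq) simp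
  also have "\<dots> = (\<Sum>r\<in>{r. poly Pc r = 0}. order r Pc)" by (simp add: degree_linear_power)
  finally show "degree Pc = (\<Sum>r\<in>{r. poly Pc r = 0}. order r Pc)" .
qed

lemma sum_card_levels:
  assumes fin: "finite Z"
  shows "(\<Sum>j\<in>{1..i}. card {r\<in>Z. j \<le> (f r::nat)}) = (\<Sum>r\<in>Z. min (f r) i)"
proof -
  have "(\<Sum>j\<in>{1..i}. card {r\<in>Z. j \<le> f r}) = (\<Sum>j\<in>{1..i}. \<Sum>r\<in>Z. if j \<le> f r then 1 else 0)"
    using fin by (simp add: sum.inter_filter[symmetric])
  also have "\<dots> = (\<Sum>r\<in>Z. \<Sum>j\<in>{1..i}. if j \<le> f r then 1 else 0)" by (rule sum.swap)
  also have "\<dots> = (\<Sum>r\<in>Z. card {j\<in>{1..i}. j \<le> f r})"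
    by (simp add: sum.inter_filter[symmetric])
  also have "\<dots> = (\<Sum>r\<in>Z. min (f r) i)"
  proof (rule sum.cong)
    fix r assume "r \<in> Z"
    have "{j\<in>{1..i}. j \<le> f r} = {1..min (f r) i}" by auto
    then show "card {j\<in>{1..i}. j \<le> f r} = min (f r) i" by simp
  qed simp
  finally show ?thesis .
qed

theorem mainTheorem1:
  fixes P :: "real poly" and n :: nat
  assumes "degree P = n" and "n \<ge> 2"
  shows "\<forall>i. 1 \<le> i \<and> i \<le> n \<longrightarrow>
    (let Pc = map_poly complex_of_real P;
         R = subresultant (map (\<lambda>k. (pderiv ^^ k) P) [0..<i+1])
                          (map (mult_conj P) [1..<i+1]);
         G = Gcd {(pderiv ^^ k) P | k. k \<le> i}
     in (\<exists>c::complex. c \<noteq> 0 \<and>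
           map_poly complex_of_real R =
             smult c (\<Prod>r\<in>{r. poly Pc r = 0 \<and> order r Pc > i}. [:-r, 1:] ^ (order r Pc - i)))
      \<and> (\<exists>c::real. c \<noteq> 0 \<and> R = smult c G))"
proof (intro allI impI)
  fix i assume i: "1 \<le> i \<and> i \<le> n"
  define Pc where "Pc = map_poly complex_of_real P"
  define F where "F = map (\<lambda>k. (pderiv ^^ k) P) [0..<i+1]"
  define \<delta> where "\<delta> = map (mult_conj P) [1..<i+1]"
  define mc where "mc = (\<lambda>j. card {r. poly Pc r = 0 \<and> j \<le> order r Pc})"
  define Z where "Z = {r. poly Pc r = 0}"
  define Zi where "Zi = {r. poly Pc r = 0 \<and> order r Pc > i}"
  define Q where "Q = (\<Prod>r\<in>Zi. [:-r, 1:] ^ (order r Pc - i))"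
  define D0 where "D0 = sres_delta0 F \<delta>"
  define rs where "rs = sres_row_polys F \<delta>"
  define q where "q = D0 + n"
  define R where "R = subresultant F \<delta>"
  define G where "G = Gcd {(pderiv ^^ k) P | k. k \<le> i}"
  define p where "p = length rs"
  have mc_eq: "mult_conj P j = mc j" for j unfolding mult_conj_def mc_def Pc_def by simp
  have P0: "P \<noteq> 0" using assms by auto
  have Pc0: "Pc \<noteq> 0" unfolding Pc_def using P0 by (simp add: mpc_eq_0_iff)
  have degPc: "degree Pc = n" unfolding Pc_def using assms(1) by (simp add: mpc_degree)
  have finZ: "finite Z" and nsum: "n = (\<Sum>r\<in>Z. order r Pc)"
    using degree_eq_sum_order[OF Pc0] degPc unfolding Z_def by auto
  have lenF: "length F = Suc (length \<delta>)" and lend: "length \<delta> = i"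
    unfolding F_def \<delta>_def by simp_all
  have Fnth: "F ! j = (pderiv ^^ j) P" if "j \<le> i" for j
    unfolding F_def using that by (simp del: upt_Suc add: nth_upt)
  have dnth: "\<delta> ! (j - 1) = mc j" if "1 \<le> j" "j \<le> i" for j
    unfolding \<delta>_def using that by (simp del: upt_Suc add: nth_upt mc_eq)
  have sumd: "sum_list \<delta> = (\<Sum>j\<in>{1..i}. mc j)"
  proof -
    have "sum_list \<delta> = sum (mult_conj P) (set [1..<i+1])"
      unfolding \<delta>_def by (simp only: sum_set_upt_conv_sum_list_nat)
    also have "set [1..<i+1] = {1..i}" by auto
    finally show ?thesis by (simp add: mc_eq)
  qed
  have mcsum: "(\<Sum>j\<in>{1..i}. mc j) = (\<Sum>r\<in>Z. min (order r Pc) i)"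
  proof -
    have "mc j = card {r\<in>Z. j \<le> order r Pc}" for j unfolding mc_def Z_def by simp
    then show ?thesis using sum_card_levels[OF finZ, where i=i and f="\<lambda>r. order r Pc"] by simp
  qed
  have finZi: "finite Zi" using finZ unfolding Zi_def Z_def by (auto intro: finite_subset)
  have degQ: "degree Q = (\<Sum>r\<in>Z. order r Pc - i)"
  proof -
    have "degree Q = (\<Sum>r\<in>Zi. degree ([:-r, 1:] ^ (order r Pc - i)))"
      unfolding Q_def by (rule degree_prod_sum_eq) simp
    also have "\<dots> = (\<Sum>r\<in>Zi. order r Pc - i)" by (simp add: degree_linear_power)
    also have "\<dots> = (\<Sum>r\<in>Z. order r Pc - i)"
      by (rule sum.mono_neutral_left) (use finZ in \<open>auto simp: Zi_def Z_def\<close>)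
    finally show ?thesis .
  qed
  have count: "(\<Sum>j\<in>{1..i}. mc j) + degree Q = n"
  proof -
    have "(\<Sum>j\<in>{1..i}. mc j) + degree Q = (\<Sum>r\<in>Z. min (order r Pc) i + (order r Pc - i))"
      unfolding mcsum degQ sum.distrib ..
    also have "\<dots> = (\<Sum>r\<in>Z. order r Pc)" by (rule sum.cong) auto
    finally show ?thesis using nsum by simp
  qed
  have mc1: "1 \<le> mc 1"
  proof -
    have "Z \<noteq> {}" using nsum assms(2) by auto
    then obtain z where z: "z \<in> Z" by auto
    then have "order z Pc \<noteq> 0" using Pc0 order_root unfolding Z_def by auto
    then have "z \<in> {r. poly Pc r = 0 \<and> 1 \<le> order r Pc}" using z unfolding Z_def by auto
    moreover have "finite {r. poly Pc r = 0 \<and> 1 \<le> order r Pc}"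
      using finZ unfolding Z_def by (auto intro: finite_subset)
    ultimately have "card {r. poly Pc r = 0 \<and> 1 \<le> order r Pc} > 0" by (auto simp: card_gt_0_iff)
    then show ?thesis unfolding mc_def by simp
  qed
  have mcle: "mc 1 \<le> (\<Sum>j\<in>{1..i}. mc j)"
    by (rule member_le_sum) (use i in auto)
  have rs_eq: "rs = rows_of (zip F (D0 # \<delta>))" unfolding rs_def D0_def by (rule row_polys_eq)
  have lenrs: "p = D0 + sum_list \<delta>"
    unfolding p_def rs_eq length_rows_of using lenF by simp
  have p1: "1 \<le> p" using lenrs sumd mc1 mcle by simp
  have pq: "p \<le> q" using lenrs sumd count unfolding q_def by simp
  have qp: "q - p = degree Q" using lenrs sumd count unfolding q_def by simp
  have degF0: "degree (F ! 0) = n" using Fnth[of 0] assms(1) by simp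
  have RSM: "R = det_poly (SM rs q)"
    unfolding R_def subresultant_def gen_syl_eq rs_def q_def D0_def degF0 ..
  have deg_rs: "\<forall>r<length rs. \<forall>k\<ge>q. coeff (rs ! r) k = 0"
    using rows_deg[OF lenF] unfolding rs_def q_def D0_def degF0 .
  define ps where "ps = zip F (D0 # \<delta>)"
  have lenps: "length ps = Suc i" unfolding ps_def using lenF lend by simp
  have fstps: "fst (ps ! j) = (pderiv ^^ j) P" if "j \<le> i" for j
    unfolding ps_def using that lenF lend Fnth by simp
  have sndps: "snd (ps ! j) = mc j" if "1 \<le> j" "j \<le> i" for j
    unfolding ps_def using that lenF lend dnth[of j] by (cases j) auto
  have key: "\<exists>A. (\<Sum>r<p. smult (v r) (rs ! r)) = (\<Sum>j\<le>i. A j * (pderiv ^^ j) P)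
      \<and> (\<forall>j. 1 \<le> j \<and> j \<le> i \<longrightarrow> (\<forall>k\<ge>mc j. coeff (A j) k = 0))
      \<and> ((\<forall>j\<le>i. A j = 0) \<longrightarrow> (\<forall>r<p. v r = 0))" for v
  proof -
    obtain A where A: "(\<Sum>r<length (rows_of ps). smult (v r) (rows_of ps ! r)) = (\<Sum>j<length ps. A j * fst (ps ! j))"
      "\<forall>j<length ps. \<forall>k\<ge>snd (ps ! j). coeff (A j) k = 0"
      "(\<forall>j<length ps. A j = 0) \<longrightarrow> (\<forall>r<length (rows_of ps). v r = 0)"
      using rows_rep[of ps, THEN spec, of v] by blast
    have rsps: "rs = rows_of ps" unfolding rs_eq ps_def ..
    have e: "(\<Sum>r<p. smult (v r) (rs ! r)) = (\<Sum>j\<le>i. A j * (pderiv ^^ j) P)"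
      unfolding p_def rsps A(1) lenps lessThan_Suc_atMost by (rule sum.cong) (simp_all add: fstps)
    have b: "\<forall>j. 1 \<le> j \<and> j \<le> i \<longrightarrow> (\<forall>k\<ge>mc j. coeff (A j) k = 0)"
      using A(2) lenps sndps by (metis le_imp_less_Suc)
    have z: "(\<forall>j\<le>i. A j = 0) \<longrightarrow> (\<forall>r<p. v r = 0)"
      using A(3) lenps unfolding p_def rsps by (metis less_Suc_eq_le)
    show ?thesis using e b z by blast
  qed
  have Qdvd: "Q dvd (pderiv ^^ j) Pc" if j: "j \<le> i" for j
    unfolding Q_def
  proof (rule prod_lin_dvd[OF finZi], rule ballI)
    fix r assume r: "r \<in> Zi"
    then have "order r ((pderiv ^^ j) Pc) = order r Pc - j"
      using order_higher_pderiv[OF Pc0, of j r] j unfolding Zi_def by simp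
    moreover have "order r Pc - i \<le> order r Pc - j" using j by simp
    ultimately show "[:-r, 1:] ^ (order r Pc - i) dvd (pderiv ^^ j) Pc"
      unfolding order_divides by simp
  qed
  have Qcomb: "Q dvd mpc (\<Sum>j\<le>i. A j * (pderiv ^^ j) P)" for A
    unfolding mpc_sum mpc_mult mpc_higher_pderiv Pc_def[symmetric]
    by (rule dvd_sum) (simp add: Qdvd)
  have Q0: "Q \<noteq> 0" unfolding Q_def using finZi by (simp add: prod_zero_iff)
  have detnz: "det (Mi rs q (q - p)) \<noteq> 0"
    unfolding p_def
  proof (rule det_top_nonzero[OF p1[unfolded p_def] pq[unfolded p_def] deg_rs])
    fix v assume hv: "\<forall>k\<ge>q - length rs. coeff (\<Sum>r<length rs. smult (v r) (rs ! r)) k = 0"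
    obtain A where A: "(\<Sum>r<p. smult (v r) (rs ! r)) = (\<Sum>j\<le>i. A j * (pderiv ^^ j) P)"
      "\<forall>j. 1 \<le> j \<and> j \<le> i \<longrightarrow> (\<forall>k\<ge>mc j. coeff (A j) k = 0)"
      "(\<forall>j\<le>i. A j = 0) \<longrightarrow> (\<forall>r<p. v r = 0)"
      using key[of v] by blast
    define T where "T = (\<Sum>r<p. smult (v r) (rs ! r))"
    have T0: "mpc T = 0"
    proof (rule ccontr)
      assume nz: "mpc T \<noteq> 0"
      then have Tnz: "T \<noteq> 0" by (simp add: mpc_eq_0_iff)
      have "degree T < q - p"
      proof (rule ccontr)
        assume "\<not> degree T < q - p"
        then have "coeff T (degree T) = 0" using hv unfolding T_def p_def by simp
        then show False using Tnz by simp
      qed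
      moreover have "degree Q \<le> degree (mpc T)"
        using dvd_imp_degree_le[OF _ nz] Qcomb[of A] A(1) unfolding T_def by simp
      ultimately show False using qp by (simp add: mpc_degree)
    qed
    have "(\<Sum>j\<le>i. mpc (A j) * (pderiv ^^ j) Pc) = 0"
      using T0 A(1) unfolding T_def Pc_def by (simp add: mpc_sum mpc_mult mpc_higher_pderiv)
    moreover have "\<forall>j. 1 \<le> j \<and> j \<le> i \<longrightarrow> (\<forall>k \<ge> card {r. poly Pc r = 0 \<and> order r Pc \<ge> j}. coeff (mpc (A j)) k = 0)"
      using A(2) unfolding mc_def by (simp add: coeff_map_poly)
    ultimately have "\<forall>j\<le>i. mpc (A j) = 0"
      using inj_lemma[OF Pc0, of i "\<lambda>j. mpc (A j)"] by blast
    then have "\<forall>j\<le>i. A j = 0" by (simp add: mpc_eq_0_iff)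
    then show "\<forall>r<length rs. v r = 0" using A(3) unfolding p_def by blast
  qed
  obtain AR where AR: "R = (\<Sum>j\<le>i. AR j * (pderiv ^^ j) P)"
  proof -
    have "R = (\<Sum>r<p. smult (cofactor (Mi rs q 0) r (length rs - 1)) (rs ! r))"
      unfolding RSM p_def by (rule det_poly_rep[OF p1[unfolded p_def] pq[unfolded p_def] deg_rs])
    then show ?thesis using key[of "\<lambda>r. cofactor (Mi rs q 0) r (length rs - 1)"] that by auto
  qed
  have cR: "coeff R (q - p) \<noteq> 0"
    using det_poly_top(1)[OF p1[unfolded p_def] pq[unfolded p_def]] detnz unfolding RSM p_def by simp
  have dR: "degree R \<le> q - p"
    using det_poly_top(2)[OF p1[unfolded p_def] pq[unfolded p_def]] unfolding RSM p_def by simp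
  have R0: "R \<noteq> 0" using cR by auto
  have degR: "degree R = degree Q" using dR le_degree[OF cR] qp by simp
  have QR: "Q dvd mpc R" using Qcomb[of AR] AR by simp
  then obtain H where H: "mpc R = Q * H" by (elim dvdE)
  have H0: "H \<noteq> 0" using H R0 by (auto simp: mpc_eq_0_iff)
  have "degree (mpc R) = degree Q + degree H" using H Q0 H0 by (simp add: degree_mult_eq)
  then have "degree H = 0" using degR by (simp add: mpc_degree)
  then have Hc: "H = [:coeff H 0:]" by (rule const_of_degree0)
  define c where "c = coeff H 0"
  have c0: "c \<noteq> 0" using H0 Hc unfolding c_def by auto
  have "Q * [:c:] = smult c Q" by simp
  then have first: "mpc R = smult c Q" using H Hc unfolding c_def by simp
  have GD: "G dvd (pderiv ^^ k) P" if "k \<le> i" for k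
    unfolding G_def by (rule Gcd_dvd) (use that in auto)
  have GR: "G dvd R" unfolding AR by (rule dvd_sum) (simp add: GD)
  have RD: "R dvd (pderiv ^^ k) P" if "k \<le> i" for k
  proof (rule mpc_dvd)
    have "smult c Q dvd (pderiv ^^ k) Pc" using Qdvd[OF that] c0 by (simp add: smult_dvd_iff)
    then show "mpc R dvd mpc ((pderiv ^^ k) P)" unfolding first mpc_higher_pderiv Pc_def .
  qed
  have RG: "R dvd G" unfolding G_def by (rule Gcd_greatest) (use RD in auto)
  have G0: "G \<noteq> 0" using GR R0 by auto
  obtain K where K: "R = G * K" using GR by (elim dvdE)
  have K0: "K \<noteq> 0" using K R0 by auto
  have "degree R \<le> degree G" using dvd_imp_degree_le[OF RG G0] .
  moreover have "degree R = degree G + degree K" using K G0 K0 by (simp add: degree_mult_eq)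
  ultimately have "degree K = 0" by simp
  then have Kc: "K = [:coeff K 0:]" by (rule const_of_degree0)
  have c'0: "coeff K 0 \<noteq> 0" using K0 Kc by auto
  have "G * [:coeff K 0:] = smult (coeff K 0) G" by simp
  then have second: "R = smult (coeff K 0) G" using K Kc by simp
  have goal: "(\<exists>c::complex. c \<noteq> 0 \<and> mpc R = smult c Q) \<and> (\<exists>c::real. c \<noteq> 0 \<and> R = smult c G)"
    using first c0 second c'0 by blast
  show "let Pc = map_poly complex_of_real P;
         R = subresultant (map (\<lambda>k. (pderiv ^^ k) P) [0..<i+1])
                          (map (mult_conj P) [1..<i+1]);
         G = Gcd {(pderiv ^^ k) P | k. k \<le> i}
     in (\<exists>c::complex. c \<noteq> 0 \<and>
           map_poly complex_of_real R =
             smult c (\<Prod>r\<in>{r. poly Pc r = 0 \<and> order r Pc > i}. [:-r, 1:] ^ (order r Pc - i)))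
      \<and> (\<exists>c::real. c \<noteq> 0 \<and> R = smult c G)"
    unfolding Let_def Pc_def[symmetric] F_def[symmetric] \<delta>_def[symmetric] R_def[symmetric]
      G_def[symmetric] Zi_def[symmetric] Q_def[symmetric]
    using goal .
qed

end
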